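(* Let $\mathcal{H}$ be a reproducing kernel Hilbert space of real-valued functions on $\mathbb{R}^p$ with positive definite reproducing kernel $K$ and norm $\|\cdot\|_{\mathcal{H}}$. Let training data $\{(y_i,\mathbf{x}_i)\}_{i=1}^N\subset\mathbb{R}\times\mathbb{R}^p$ be given, set $\mathbf{y}:=[y_1,\dots,y_N]'$, and let $\mathbf{K}\in\mathbb{R}^{N\times N}$ with $[\mathbf{K}]_{ij}=K(\mathbf{x}_i,\mathbf{x}_j)$ be positive definite. Let $\mu\ge0$, $\lambda_1\ge0$, and define $$\mathbf{X}_\mu:=\begin{bmatrix}\mathbf{I}_N-\mathbf{K}(\mathbf{K}+\mu\mathbf{I}_N)^{-1}\\ (\mu\mathbf{K})^{1/2}(\mathbf{K}+\mu\mathbf{I}_N)^{-1}\end{bmatrix}\in\mathbb{R}^{2N\times N}.$$ Let $$\hat{\mathbf{o}}_{\mathrm{Lasso}}\in\arg\min_{\mathbf{o}\in\mathbb{R}^N}\ \|\mathbf{X}_\mu\mathbf{y}-\mathbf{X}_\mu\mathbf{o}\|_2^2+\lambda_1\|\mathbf{o}\|_1 .$$ Then the minimizers $(\hat f,\hat{\mathbf{o}})$ of $$\min_{f\in\mathcal{H},\ \mathbf{o}\in\mathbb{R}^N}\Big[\sum_{i=1}^N (y_i-f(\mathbf{x}_i)-o_i)^2+\mu\|f\|_{\mathcal{H}}^2+\lambda_1\|\mathbf{o}\|_1\Big]$$ are determined by $\hat{\mathbf{o}}_{\mathrm{Lasso}}$ as $\hat{\mathbf{o}}=\hat{\mathbf{o}}_{\mathrm{Lasso}}$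 and $\hat f(\mathbf{x})=\sum_{i=1}^N\hat\beta_iK(\mathbf{x},\mathbf{x}_i)$ with $\hat{\boldsymbol\beta}=(\mathbf{K}+\mu\mathbf{I}_N)^{-1}(\mathbf{y}-\hat{\mathbf{o}}_{\mathrm{Lasso}})$; i.e., this pair is a minimizer of the latter problem.
   Context: $(\mu\mathbf{K})^{1/2}$ denotes the symmetric positive semidefinite square root; $\mathbf{I}_N$ is the $N\times N$ identity. *)

theory Defs
  imports "HOL-Analysis.Analysis"
begin

definition psd_mat :: "real^'n^'n \<Rightarrow> bool" where
  "psd_mat S \<longleftrightarrow> (\<forall>v. 0 \<le> v \<bullet> (S *v v))"

definition pd_mat :: "real^'n^'n \<Rightarrow> bool" where
  "pd_mat S \<longleftrightarrow> (\<forall>v. v \<noteq> 0 \<longrightarrow> 0 < v \<bullet> (S *v v))"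

definition psd_sqrt :: "real^'n^'n \<Rightarrow> real^'n^'n" where
  "psd_sqrt M = (THE S. transpose S = S \<and> psd_mat S \<and> S ** S = M)"

definition pd_kernel :: "('a \<Rightarrow> 'a \<Rightarrow> real) \<Rightarrow> bool" where
  "pd_kernel K \<longleftrightarrow> (\<forall>a b. K a b = K b a) \<and>
     (\<forall>S c. finite S \<longrightarrow> 0 \<le> (\<Sum>a\<in>S. \<Sum>b\<in>S. c a * c b * K a b))"

text \<open>An RKHS on domain 'a, modelled as a Hilbert space 'h whose elements are identified
  with the functions \<open>rkhs_eval f = (\<lambda>z. f \<bullet> k z)\<close> (injectively); \<open>k z\<close> is the kernel section
  \<open>K(\<cdot>,z)\<close>, and K is the reproducing kernel.\<close>
definition rkhs_eval :: "('a \<Rightarrow> 'h::real_inner) \<Rightarrow> 'h \<Rightarrow> 'a \<Rightarrow> real" where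
  "rkhs_eval k f z = f \<bullet> k z"

definition is_rkhs :: "('a \<Rightarrow> 'h::{real_inner,complete_space}) \<Rightarrow> ('a \<Rightarrow> 'a \<Rightarrow> real) \<Rightarrow> bool" where
  "is_rkhs k K \<longleftrightarrow> inj (rkhs_eval k) \<and> (\<forall>z w. rkhs_eval k (k w) z = K z w)"

definition l1norm :: "real^'n \<Rightarrow> real" where
  "l1norm v = (\<Sum>i\<in>UNIV. \<bar>v $ i\<bar>)"

definition kmat :: "('a \<Rightarrow> 'a \<Rightarrow> real) \<Rightarrow> ('n::finite \<Rightarrow> 'a) \<Rightarrow> real^'n^'n" where
  "kmat K x = (\<chi> i j. K (x i) (x j))"

text \<open>The stacked 2N x N matrix X_mu; rows indexed by 'n + 'n (top block Inl, bottom block Inr).\<close>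
definition X_mu :: "real \<Rightarrow> real^'n^'n \<Rightarrow> real^'n^('n + 'n)" where
  "X_mu \<mu> Km = (let R = matrix_inv (Km + \<mu> *\<^sub>R mat 1);
                   A = mat 1 - Km ** R;
                   B = psd_sqrt (\<mu> *\<^sub>R Km) ** R
               in (\<chi> r. case r of Inl j \<Rightarrow> A $ j | Inr j \<Rightarrow> B $ j))"

definition lasso_obj :: "real \<Rightarrow> real \<Rightarrow> real^'n^'n \<Rightarrow> real^'n \<Rightarrow> real^'n \<Rightarrow> real" where
  "lasso_obj \<mu> lam1 Km y ov = (norm (X_mu \<mu> Km *v y - X_mu \<mu> Km *v ov))\<^sup>2 + lam1 * l1norm ov"

definition robust_obj :: "('a \<Rightarrow> 'h::real_inner) \<Rightarrow> ('n::finite \<Rightarrow> 'a) \<Rightarrow> real^'n \<Rightarrow> real \<Rightarrow> real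
      \<Rightarrow> 'h \<Rightarrow> real^'n \<Rightarrow> real" where
  "robust_obj k x y \<mu> lam1 f ov =
     (\<Sum>i\<in>UNIV. (y $ i - rkhs_eval k f (x i) - ov $ i)\<^sup>2) + \<mu> * (norm f)\<^sup>2 + lam1 * l1norm ov"

end

theory Submission
  imports Defs
begin

lemma sym_inner:
  fixes M :: "real^'n^'n"
  assumes "transpose M = M"
  shows "x \<bullet> (M *v y) = y \<bullet> (M *v x)"
proof -
  have "x \<bullet> (M *v y) = (x v* M) \<bullet> y" by (simp add: dot_lmul_matrix)
  also have "x v* M = transpose M *v x" by simp
  finally show ?thesis using assms by (simp add: inner_commute)
qed

definition outer :: "real^'n \<Rightarrow> real^'n^'n" where
  "outer u = (\<chi> i j. u$i * u$j)"

lemma outer_mult: "outer u *v v = (u \<bullet> v) *\<^sub>R u"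
  by (simp add: outer_def matrix_vector_mult_def inner_vec_def vec_eq_iff sum_distrib_left algebra_simps)

lemma outer_sym: "transpose (outer u) = outer u"
  by (simp add: outer_def transpose_def vec_eq_iff)

lemma psd_outer: "psd_mat (outer u)"
  by (simp add: psd_mat_def outer_mult inner_commute)

lemma psd_add: "psd_mat A \<Longrightarrow> psd_mat B \<Longrightarrow> psd_mat (A + B)"
  by (simp add: psd_mat_def matrix_vector_mult_add_rdistrib inner_add_right add_nonneg_nonneg)

lemma psd_scale: "psd_mat A \<Longrightarrow> c \<ge> 0 \<Longrightarrow> psd_mat (c *\<^sub>R A)"
  by (simp add: psd_mat_def scaleR_matrix_vector_assoc[symmetric])

lemma quad_expand:
  fixes M :: "real^'n^'n"
  assumes "transpose M = M"
  shows "(a + t *\<^sub>R b) \<bullet> (M *v (a + t *\<^sub>R b)) = a \<bullet> (M *v a) + 2 * t * (b \<bullet> (M *v a)) + t^2 * (b \<bullet> (M *v b))"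
proof -
  have "a \<bullet> (M *v b) = b \<bullet> (M *v a)" using sym_inner[OF assms] .
  then show ?thesis
    by (simp add: matrix_vector_right_distrib matrix_vector_mult_scaleR inner_add_left inner_add_right power2_eq_square algebra_simps)
qed

lemma quad_nonneg_zero:
  fixes a b :: real
  assumes "\<And>t. 0 \<le> 2 * t * a + t^2 * b"
  shows "a = 0"
proof (rule ccontr)
  assume "a \<noteq> 0"
  have b: "b \<ge> 0" using assms[of 1] assms[of "-1"] by simp
  define t where "t = - a / (b + 1)"
  have a: "a = - t * (b + 1)" using b by (simp add: t_def)
  have "t \<noteq> 0" using \<open>a \<noteq> 0\<close> a by auto
  have "0 \<le> 2 * t * a + t^2 * b" by (rule assms)
  also have "2 * t * a + t^2 * b = - (t^2 * (b + 2))" by (simp add: a power2_eq_square algebra_simps)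
  also have "\<dots> < 0" using b \<open>t \<noteq> 0\<close> by simp
  finally show False by simp
qed

lemma eigen_max:
  fixes M :: "real^'n^'n"
  assumes sym: "transpose M = M" and V: "subspace V" and inv: "\<And>v. v \<in> V \<Longrightarrow> M *v v \<in> V"
    and ne: "V \<noteq> {0}"
  shows "\<exists>u\<in>V. norm u = 1 \<and> M *v u = (u \<bullet> (M *v u)) *\<^sub>R u \<and>
           (\<forall>w\<in>V. w \<bullet> (M *v w) \<le> (u \<bullet> (M *v u)) * (w \<bullet> w))"
proof -
  let ?q = "\<lambda>w. w \<bullet> (M *v w)"
  let ?T = "V \<inter> sphere 0 1"
  have cT: "compact ?T"
    by (intro closed_Int_compact closed_subspace V compact_sphere)
  obtain v where v: "v \<in> V" "v \<noteq> 0" using ne subspace_0[OF V] by blast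
  have "(1 / norm v) *\<^sub>R v \<in> ?T" using v V by (simp add: subspace_scale)
  then have neT: "?T \<noteq> {}" by blast
  have cq: "continuous_on ?T ?q"
    by (intro continuous_intros linear_continuous_on matrix_vector_mul_linear
        bounded_linear_inner_left)
  obtain u where u: "u \<in> ?T" and umax: "\<And>w. w \<in> ?T \<Longrightarrow> ?q w \<le> ?q u"
    using continuous_attains_sup[OF cT neT cq] by blast
  define m where "m = ?q u"
  have uV: "u \<in> V" and nu: "norm u = 1" using u by auto
  have uu: "u \<bullet> u = 1" using nu by (simp add: dot_square_norm)
  have bound: "?q w \<le> m * (w \<bullet> w)" if w: "w \<in> V" for w
  proof (cases "w = 0")
    case True then show ?thesis by simp
  next
    case False
    let ?w = "(1 / norm w) *\<^sub>R w"
    have "?w \<in> ?T" using w V False by (simp add: subspace_scale)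
    then have "?q ?w \<le> m" using umax m_def by blast
    moreover have "?q ?w = ?q w / (norm w)^2"
      by (simp add: matrix_vector_mult_scaleR power2_eq_square)
    ultimately have "?q w / (norm w)^2 \<le> m" by simp
    moreover have "w \<bullet> w = (norm w)^2" by (simp add: power2_norm_eq_inner)
    moreover have "(norm w)^2 > 0" using False by simp
    ultimately show ?thesis by (simp add: divide_le_eq mult.commute)
  qed
  define z where "z = m *\<^sub>R u - M *v u"
  have orth: "y \<bullet> z = 0" if y: "y \<in> V" for y
  proof (rule quad_nonneg_zero[where b = "m * (y \<bullet> y) - ?q y"])
    fix t :: real
    have "u + t *\<^sub>R y \<in> V" using uV y V by (simp add: subspace_add subspace_scale)
    then have "?q (u + t *\<^sub>R y) \<le> m * ((u + t *\<^sub>R y) \<bullet> (u + t *\<^sub>R y))" by (rule bound)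
    moreover have "?q (u + t *\<^sub>R y) = ?q u + 2 * t * (y \<bullet> (M *v u)) + t^2 * ?q y"
      by (rule quad_expand[OF sym])
    moreover have "(u + t *\<^sub>R y) \<bullet> (u + t *\<^sub>R y) = 1 + 2 * t * (y \<bullet> u) + t^2 * (y \<bullet> y)"
      using uu by (simp add: inner_add_left inner_add_right inner_commute power2_eq_square algebra_simps)
    ultimately have ineq: "?q u + 2 * t * (y \<bullet> (M *v u)) + t^2 * ?q y \<le> m * (1 + 2 * t * (y \<bullet> u) + t^2 * (y \<bullet> y))"
      by metis
    have "2 * t * (y \<bullet> z) + t^2 * (m * (y \<bullet> y) - ?q y) = m * (1 + 2 * t * (y \<bullet> u) + t^2 * (y \<bullet> y)) - (?q u + 2 * t * (y \<bullet> (M *v u)) + t^2 * ?q y)"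
      unfolding z_def m_def by (simp add: inner_diff_right algebra_simps)
    then show "0 \<le> 2 * t * (y \<bullet> z) + t^2 * (m * (y \<bullet> y) - ?q y)" using ineq by linarith
  qed
  have "z \<in> V" using uV inv V by (simp add: z_def subspace_diff subspace_scale)
  then have "z \<bullet> z = 0" by (rule orth)
  then have "z = 0" by simp
  then have "M *v u = m *\<^sub>R u" by (simp add: z_def)
  then show ?thesis using uV nu bound m_def by blast
qed

lemma transpose_add': "transpose (A + B) = transpose A + transpose (B :: real^'n^'n)"
  by (simp add: transpose_def vec_eq_iff)

lemma sqrt_exists_sub:
  fixes M :: "real^'n^'n"
  assumes sym: "transpose M = M" and psd: "psd_mat M"
  shows "subspace V \<Longrightarrow> (\<forall>v\<in>V. M *v v \<in> V) \<Longrightarrow>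
    \<exists>S. transpose S = S \<and> psd_mat S \<and> (\<forall>v. (\<forall>w\<in>V. w \<bullet> v = 0) \<longrightarrow> S *v v = 0)
        \<and> (\<forall>v\<in>V. S *v (S *v v) = M *v v)"
proof (induction "dim V" arbitrary: V rule: less_induct)
  case less
  note V = less.prems(1) and inv = less.prems(2)
  show ?case
  proof (cases "V = {0}")
    case True
    show ?thesis
      by (rule exI[of _ 0]) (auto simp: True psd_mat_def transpose_def vec_eq_iff)
  next
    case False
    obtain u where uV: "u \<in> V" and nu: "norm u = 1" and eig: "M *v u = (u \<bullet> (M *v u)) *\<^sub>R u"
      using eigen_max[OF sym V _ False] inv by blast
    define lam where "lam = u \<bullet> (M *v u)"
    have lam0: "lam \<ge> 0" using psd by (simp add: psd_mat_def lam_def)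
    have eig': "M *v u = lam *\<^sub>R u" using eig lam_def by simp
    have uu: "u \<bullet> u = 1" using nu by (simp add: dot_square_norm)
    define W where "W = {w\<in>V. w \<bullet> u = 0}"
    have subW: "subspace W"
      using V unfolding W_def subspace_def by (auto simp: inner_add_left)
    have invW: "\<forall>w\<in>W. M *v w \<in> W"
    proof
      fix w assume w: "w \<in> W"
      have "(M *v w) \<bullet> u = w \<bullet> (M *v u)" using sym_inner[OF sym, of u w] by (simp add: inner_commute)
      also have "\<dots> = 0" using w by (simp add: eig' W_def)
      finally show "M *v w \<in> W" using w inv by (simp add: W_def)
    qed
    have "W \<subseteq> V" "u \<notin> W" using uu by (auto simp: W_def)
    then have "W \<subset> V" using uV by blast
    moreover have "span W = W" "span V = V" using subW V by simp_all
    ultimately have "dim W < dim V" by (metis dim_psubset)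
    from less.hyps[OF this subW invW] obtain SW where
      SWs: "transpose SW = SW" and SWp: "psd_mat SW"
      and SWperp: "\<And>v. (\<forall>w\<in>W. w \<bullet> v = 0) \<Longrightarrow> SW *v v = 0"
      and SWsq: "\<And>v. v \<in> W \<Longrightarrow> SW *v (SW *v v) = M *v v" by blast
    define c where "c = sqrt lam"
    have cc: "c * c = lam" using lam0 by (simp add: c_def)
    define S where "S = SW + c *\<^sub>R outer u"
    have Smul: "S *v v = SW *v v + (c * (u \<bullet> v)) *\<^sub>R u" for v
      by (simp add: S_def matrix_vector_mult_add_rdistrib scaleR_matrix_vector_assoc[symmetric] outer_mult)
    have SWu: "SW *v u = 0" by (rule SWperp) (simp add: W_def)
    have "transpose S = S"
      by (simp add: S_def transpose_add' transpose_scalar outer_sym SWs)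
    moreover have "psd_mat S"
      unfolding S_def using SWp psd_outer lam0
      by (intro psd_add psd_scale) (auto simp: c_def)
    moreover have "\<forall>v. (\<forall>w\<in>V. w \<bullet> v = 0) \<longrightarrow> S *v v = 0"
    proof (intro allI impI)
      fix v assume h: "\<forall>w\<in>V. w \<bullet> v = 0"
      then have "SW *v v = 0" by (intro SWperp) (auto simp: W_def)
      moreover have "u \<bullet> v = 0" using h uV by blast
      ultimately show "S *v v = 0" by (simp add: Smul)
    qed
    moreover have "\<forall>v\<in>V. S *v (S *v v) = M *v v"
    proof
      fix v assume v: "v \<in> V"
      define w where "w = v - (u \<bullet> v) *\<^sub>R u"
      have vw: "v = w + (u \<bullet> v) *\<^sub>R u" by (simp add: w_def)
      have wW: "w \<in> W" using v uV V uu
        by (simp add: W_def w_def subspace_diff subspace_scale inner_diff_left inner_diff_right inner_commute)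
      have SWw: "u \<bullet> (SW *v w) = 0"
        using sym_inner[OF SWs, of u w] SWu by simp
      have SWv: "SW *v v = SW *v w"
        by (subst vw) (simp add: matrix_vector_right_distrib matrix_vector_mult_scaleR SWu)
      have "S *v (S *v v) = SW *v (SW *v w) + (c * c * (u \<bullet> v)) *\<^sub>R u"
        unfolding Smul SWv
        by (simp add: matrix_vector_right_distrib matrix_vector_mult_scaleR SWu SWw
            inner_add_right uu Smul)
      also have "\<dots> = M *v w + (u \<bullet> v) *\<^sub>R (M *v u)"
        using SWsq[OF wW] cc eig' by simp
      also have "\<dots> = M *v v"
        by (subst (2) vw) (simp add: matrix_vector_right_distrib matrix_vector_mult_scaleR)
      finally show "S *v (S *v v) = M *v v" .
    qed
    ultimately show ?thesis by blast
  qed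
qed

lemma sqrt_exists:
  fixes M :: "real^'n^'n"
  assumes sym: "transpose M = M" and psd: "psd_mat M"
  shows "\<exists>S. transpose S = S \<and> psd_mat S \<and> S ** S = M"
proof -
  obtain S where "transpose S = S" "psd_mat S" "\<forall>v. S *v (S *v v) = M *v v"
    using sqrt_exists_sub[OF sym psd, of UNIV] by auto
  then show ?thesis by (metis matrix_eq matrix_vector_mul_assoc)
qed

lemma psd_zero_quad:
  fixes P :: "real^'n^'n"
  assumes sym: "transpose P = P" and psd: "psd_mat P" and z: "x \<bullet> (P *v x) = 0"
  shows "P *v x = 0"
proof -
  have "y \<bullet> (P *v x) = 0" for y
  proof (rule quad_nonneg_zero[where b = "y \<bullet> (P *v y)"])
    fix t :: real
    have "0 \<le> (x + t *\<^sub>R y) \<bullet> (P *v (x + t *\<^sub>R y))" using psd by (simp add: psd_mat_def)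
    then show "0 \<le> 2 * t * (y \<bullet> (P *v x)) + t^2 * (y \<bullet> (P *v y))"
      using quad_expand[OF sym, of x t y] z by simp
  qed
  from this[of "P *v x"] show ?thesis by simp
qed

lemma sym_zero_quad:
  fixes D :: "real^'n^'n"
  assumes sym: "transpose D = D" and z: "\<And>x. x \<bullet> (D *v x) = 0"
  shows "D = 0"
proof -
  have "y \<bullet> (D *v x) = 0" for x y
    using quad_expand[OF sym, of x 1 y] z[of x] z[of y] z[of "x + y"] by simp
  then have "D *v x = 0" for x using inner_eq_zero_iff by blast
  then show ?thesis by (simp add: matrix_eq)
qed

lemma sqrt_unique:
  fixes S T :: "real^'n^'n"
  assumes Ss: "transpose S = S" and Sp: "psd_mat S" and Ts: "transpose T = T" and Tp: "psd_mat T"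
    and eq: "S ** S = T ** T"
  shows "S = T"
proof (rule ccontr)
  assume ne: "S \<noteq> T"
  define D where "D = S - T"
  have Ds: "transpose D = D" using Ss Ts by (simp add: D_def transpose_def vec_eq_iff)
  have Dn: "D \<noteq> 0" using ne by (simp add: D_def)
  have "\<exists>u l. u \<noteq> 0 \<and> l \<noteq> 0 \<and> D *v u = l *\<^sub>R u"
  proof (rule ccontr)
    assume no: "\<not> ?thesis"
    obtain u where u: "norm u = 1" "D *v u = (u \<bullet> (D *v u)) *\<^sub>R u"
      and um: "\<forall>w. w \<bullet> (D *v w) \<le> (u \<bullet> (D *v u)) * (w \<bullet> w)"
      using eigen_max[OF Ds subspace_UNIV, of] by auto
    have "u \<bullet> (D *v u) = 0" using no u by (metis norm_zero zero_neq_one)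
    then have le: "w \<bullet> (D *v w) \<le> 0" for w using um by simp
    have Dms: "transpose (- D) = - D" using Ds by (simp add: transpose_def vec_eq_iff)
    obtain u' where u': "norm u' = 1" "(- D) *v u' = (u' \<bullet> ((- D) *v u')) *\<^sub>R u'"
      and um': "\<forall>w. w \<bullet> ((- D) *v w) \<le> (u' \<bullet> ((- D) *v u')) * (w \<bullet> w)"
      using eigen_max[OF Dms subspace_UNIV] by auto
    have nD: "(- D) *v w = - (D *v w)" for w by (simp add: matrix_vector_mult_def vec_eq_iff sum_negf)
    have "D *v u' = (u' \<bullet> (D *v u')) *\<^sub>R u'" using u'(2) by (simp add: nD)
    then have "u' \<bullet> (D *v u') = 0" using no u' by (metis norm_zero zero_neq_one)
    then have ge: "0 \<le> w \<bullet> (D *v w)" for w using um'[rule_format, of w] by (simp add: nD)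
    have "D = 0" using le ge by (intro sym_zero_quad[OF Ds]) (simp add: order_antisym)
    with Dn show False by simp
  qed
  then obtain u l where u: "u \<noteq> 0" "l \<noteq> 0" and eig: "D *v u = l *\<^sub>R u" by blast
  have Dv: "D *v v = S *v v - T *v v" for v by (simp add: D_def matrix_vector_mult_diff_rdistrib)
  have "S *v (S *v u) = T *v (T *v u)" using eq by (simp add: matrix_vector_mul_assoc)
  then have zero: "S *v (D *v u) + D *v (T *v u) = 0"
    by (simp add: Dv matrix_vector_mult_diff_distrib)
  have "u \<bullet> (S *v (D *v u)) + u \<bullet> (D *v (T *v u)) = 0"
    using arg_cong[OF zero, of "\<lambda>z. u \<bullet> z"] by (simp add: inner_add_right)
  moreover have "u \<bullet> (D *v (T *v u)) = (T *v u) \<bullet> (D *v u)" by (rule sym_inner[OF Ds])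
  ultimately have "l * (u \<bullet> (S *v u) + u \<bullet> (T *v u)) = 0"
    by (simp add: eig matrix_vector_mult_scaleR inner_commute algebra_simps)
  then have sum0: "u \<bullet> (S *v u) + u \<bullet> (T *v u) = 0" using u by simp
  have "0 \<le> u \<bullet> (S *v u)" "0 \<le> u \<bullet> (T *v u)" using Sp Tp by (auto simp: psd_mat_def)
  then have "u \<bullet> (S *v u) = 0" "u \<bullet> (T *v u) = 0" using sum0 by linarith+
  then have "S *v u = 0" "T *v u = 0" using psd_zero_quad Ss Sp Ts Tp by blast+
  then have "l *\<^sub>R u = 0" using eig Dv by simp
  with u show False by simp
qed

lemma psd_sqrt_props:
  fixes M :: "real^'n^'n"
  assumes sym: "transpose M = M" and psd: "psd_mat M"
  shows "transpose (psd_sqrt M) = psd_sqrt M \<and> psd_mat (psd_sqrt M) \<and> psd_sqrt M ** psd_sqrt M = M"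
proof -
  have "\<exists>!S. transpose S = S \<and> psd_mat S \<and> S ** S = M"
    using sqrt_exists[OF sym psd] sqrt_unique by metis
  then show ?thesis unfolding psd_sqrt_def by (rule theI')
qed

lemma core:
  fixes k :: "'a \<Rightarrow> 'h::real_inner" and xs :: "'n::finite \<Rightarrow> 'a"
    and Km :: "real^'n^'n" and \<beta> r :: "real^'n" and \<mu> :: real
  assumes Kdef: "\<And>i j. k (xs j) \<bullet> k (xs i) = Km $ i $ j"
    and sol: "r - Km *v \<beta> = \<mu> *\<^sub>R \<beta>"
  shows "(\<Sum>i\<in>UNIV. (r$i - f \<bullet> k (xs i))\<^sup>2) + \<mu> * (norm f)\<^sup>2 =
     (\<Sum>i\<in>UNIV. (r$i - (Km *v \<beta>)$i)\<^sup>2) + \<mu> * (\<beta> \<bullet> (Km *v \<beta>)) +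
     ((\<Sum>i\<in>UNIV. ((f - (\<Sum>j\<in>UNIV. \<beta>$j *\<^sub>R k (xs j))) \<bullet> k (xs i))\<^sup>2)
       + \<mu> * (norm (f - (\<Sum>j\<in>UNIV. \<beta>$j *\<^sub>R k (xs j))))\<^sup>2)"
proof -
  define g where "g = (\<Sum>j\<in>UNIV. \<beta>$j *\<^sub>R k (xs j))"
  define h where "h = f - g"
  define e where "e i = r$i - (Km *v \<beta>)$i" for i
  define hh where "hh i = h \<bullet> k (xs i)" for i
  have e: "e i = \<mu> * \<beta>$i" for i
    using arg_cong[OF sol, of "\<lambda>v. v $ i"] by (simp add: e_def)
  have gk: "g \<bullet> k (xs i) = (Km *v \<beta>)$i" for i
    by (simp add: g_def inner_sum_left Kdef matrix_vector_mult_def mult.commute)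
  have gh: "g \<bullet> h = (\<Sum>j\<in>UNIV. \<beta>$j * hh j)"
    by (simp add: g_def hh_def inner_sum_left inner_sum_right inner_commute)
  have gw: "g \<bullet> w = (\<Sum>j\<in>UNIV. \<beta>$j * (w \<bullet> k (xs j)))" for w
    unfolding g_def by (simp add: inner_sum_left inner_sum_right inner_commute)
  have gg: "g \<bullet> g = \<beta> \<bullet> (Km *v \<beta>)"
    by (simp only: gw[of g] gk inner_vec_def) simp
  have f: "f = g + h" by (simp add: h_def)
  have fk: "f \<bullet> k (xs i) = (Km *v \<beta>)$i + hh i" for i
    by (simp add: f inner_add_left gk hh_def)
  have nf: "(norm f)\<^sup>2 = \<beta> \<bullet> (Km *v \<beta>) + 2 * (\<Sum>j\<in>UNIV. \<beta>$j * hh j) + (norm h)\<^sup>2"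
    by (simp add: power2_norm_eq_inner f inner_add_left inner_add_right gg gh inner_commute[of h g])
  have "(\<Sum>i\<in>UNIV. (r$i - f \<bullet> k (xs i))\<^sup>2) = (\<Sum>i\<in>UNIV. (e i - hh i)\<^sup>2)"
    by (simp add: fk e_def algebra_simps)
  also have "\<dots> = (\<Sum>i\<in>UNIV. (e i)\<^sup>2) - 2 * \<mu> * (\<Sum>i\<in>UNIV. \<beta>$i * hh i) + (\<Sum>i\<in>UNIV. (hh i)\<^sup>2)"
    by (simp add: power2_diff sum.distrib sum_subtractf sum_distrib_left e algebra_simps)
  finally have s1: "(\<Sum>i\<in>UNIV. (r$i - f \<bullet> k (xs i))\<^sup>2) = (\<Sum>i\<in>UNIV. (e i)\<^sup>2) - 2 * \<mu> * (\<Sum>i\<in>UNIV. \<beta>$i * hh i) + (\<Sum>i\<in>UNIV. (hh i)\<^sup>2)" .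
  show ?thesis
    unfolding g_def[symmetric] h_def[symmetric] e_def[symmetric] hh_def[symmetric] s1 nf
    by (simp add: algebra_simps)
qed

lemma norm_sq_vec: "(norm (v :: real^'m))\<^sup>2 = (\<Sum>i\<in>UNIV. (v$i)\<^sup>2)"
  unfolding power2_norm_eq_inner by (simp add: inner_vec_def power2_eq_square)

lemma sum_plus_univ:
  fixes g :: "('a::finite + 'b::finite) \<Rightarrow> real"
  shows "(\<Sum>s\<in>UNIV. g s) = (\<Sum>j\<in>UNIV. g (Inl j)) + (\<Sum>j\<in>UNIV. g (Inr j))"
proof -
  have "(\<Sum>s\<in>UNIV. g s) = (\<Sum>s\<in>(UNIV <+> UNIV). g s)" by simp
  also have "\<dots> = (\<Sum>j\<in>UNIV. g (Inl j)) + (\<Sum>j\<in>UNIV. g (Inr j))"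
    by (subst sum.Plus) auto
  finally show ?thesis .
qed

lemma lasso_eq:
  fixes Km :: "real^'n::finite^'n" and y ov :: "real^'n"
  assumes sym: "transpose Km = Km" and psd: "psd_mat Km" and mu: "\<mu> \<ge> 0"
  shows "lasso_obj \<mu> lam1 Km y ov =
    (\<Sum>i\<in>UNIV. ((y - ov)$i - (Km *v (matrix_inv (Km + \<mu> *\<^sub>R mat 1) *v (y - ov)))$i)\<^sup>2)
    + \<mu> * ((matrix_inv (Km + \<mu> *\<^sub>R mat 1) *v (y - ov)) \<bullet> (Km *v (matrix_inv (Km + \<mu> *\<^sub>R mat 1) *v (y - ov))))
    + lam1 * l1norm ov"
proof -
  define R where "R = matrix_inv (Km + \<mu> *\<^sub>R mat 1)"
  define r where "r = y - ov"
  define \<beta> where "\<beta> = R *v r"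
  define S where "S = psd_sqrt (\<mu> *\<^sub>R Km)"
  define A where "A = mat 1 - Km ** R"
  define B where "B = S ** R"
  have X: "X_mu \<mu> Km = (\<chi> s. case s of Inl j \<Rightarrow> A $ j | Inr j \<Rightarrow> B $ j)"
    by (simp only: X_mu_def Let_def A_def B_def R_def S_def)
  have XL: "(X_mu \<mu> Km *v r) $ Inl j = (A *v r) $ j" for j
    by (simp add: X matrix_vector_mult_def)
  have XR: "(X_mu \<mu> Km *v r) $ Inr j = (B *v r) $ j" for j
    by (simp add: X matrix_vector_mult_def)
  have Ar: "A *v r = r - Km *v \<beta>"
    by (simp add: A_def \<beta>_def matrix_vector_mult_diff_rdistrib matrix_vector_mul_assoc)
  have Br: "B *v r = S *v \<beta>"
    by (simp add: B_def \<beta>_def matrix_vector_mul_assoc)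
  have Sp: "transpose S = S \<and> psd_mat S \<and> S ** S = \<mu> *\<^sub>R Km"
    unfolding S_def
    by (rule psd_sqrt_props) (simp_all add: transpose_scalar sym psd psd_scale mu)
  have "(\<Sum>j\<in>UNIV. ((S *v \<beta>)$j)\<^sup>2) = (S *v \<beta>) \<bullet> (S *v \<beta>)"
    by (simp add: inner_vec_def power2_eq_square)
  also have "\<dots> = \<beta> \<bullet> (S *v (S *v \<beta>))"
    using sym_inner[of S "S *v \<beta>" \<beta>] Sp by simp
  also have "\<dots> = \<mu> * (\<beta> \<bullet> (Km *v \<beta>))"
    using Sp by (simp add: matrix_vector_mul_assoc scaleR_matrix_vector_assoc[symmetric])
  finally have Bsq: "(\<Sum>j\<in>UNIV. ((S *v \<beta>)$j)\<^sup>2) = \<mu> * (\<beta> \<bullet> (Km *v \<beta>))" .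
  have "(norm (X_mu \<mu> Km *v y - X_mu \<mu> Km *v ov))\<^sup>2 = (norm (X_mu \<mu> Km *v r))\<^sup>2"
    by (simp add: r_def matrix_vector_mult_diff_distrib)
  also have "\<dots> = (\<Sum>j\<in>UNIV. ((A *v r)$j)\<^sup>2) + (\<Sum>j\<in>UNIV. ((B *v r)$j)\<^sup>2)"
    unfolding norm_sq_vec by (subst sum_plus_univ) (simp add: XL XR)
  finally show ?thesis
    unfolding lasso_obj_def R_def[symmetric] r_def[symmetric] \<beta>_def[symmetric]
    using Ar Br Bsq by simp
qed

theorem proposition2:
  fixes k :: "real^'p \<Rightarrow> 'h::{real_inner,complete_space}"
    and K :: "real^'p \<Rightarrow> real^'p \<Rightarrow> real"
    and x :: "'n::finite \<Rightarrow> real^'p"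
    and y :: "real^'n"
    and \<mu> lam1 :: real
    and o_lasso :: "real^'n"
  assumes rkhs: "is_rkhs k K"
    and kpd: "pd_kernel K"
    and Kpd: "pd_mat (kmat K x)"
    and mu: "\<mu> \<ge> 0" and lam: "lam1 \<ge> 0"
    and lasso: "\<forall>ov. lasso_obj \<mu> lam1 (kmat K x) y o_lasso \<le> lasso_obj \<mu> lam1 (kmat K x) y ov"
  shows "let \<beta> = matrix_inv (kmat K x + \<mu> *\<^sub>R mat 1) *v (y - o_lasso)
         in (\<exists>fh. \<forall>z. rkhs_eval k fh z = (\<Sum>i\<in>UNIV. \<beta> $ i * K z (x i))) \<and>
            (\<forall>fh. (\<forall>z. rkhs_eval k fh z = (\<Sum>i\<in>UNIV. \<beta> $ i * K z (x i))) \<longrightarrow>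
               (\<forall>f ov. robust_obj k x y \<mu> lam1 fh o_lasso \<le> robust_obj k x y \<mu> lam1 f ov))"
proof -
  define Km where "Km = kmat K x"
  define A0 where "A0 = Km + \<mu> *\<^sub>R mat 1"
  define R where "R = matrix_inv A0"
  have Ksym: "K a b = K b a" for a b using kpd by (simp add: pd_kernel_def)
  have sym: "transpose Km = Km" by (simp add: Km_def kmat_def transpose_def vec_eq_iff Ksym)
  have pd: "pd_mat Km" using Kpd by (simp add: Km_def)
  have psd: "psd_mat Km" using pd unfolding pd_mat_def psd_mat_def
    by (metis less_le matrix_vector_mult_0_right inner_zero_left order_refl)
  have kk: "k w \<bullet> k z = K z w" for w z using rkhs by (simp add: is_rkhs_def rkhs_eval_def)
  have Kdef: "k (x j) \<bullet> k (x i) = Km $ i $ j" for i j by (simp add: kk Km_def kmat_def)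
  have A0v: "A0 *v v = Km *v v + \<mu> *\<^sub>R v" for v
    by (simp add: A0_def matrix_vector_mult_add_rdistrib scaleR_matrix_vector_assoc[symmetric])
  have ker: "\<forall>v. A0 *v v = 0 \<longrightarrow> v = 0"
  proof (intro allI impI)
    fix v assume h: "A0 *v v = 0"
    show "v = 0"
    proof (rule ccontr)
      assume "v \<noteq> 0"
      then have "0 < v \<bullet> (Km *v v)" using pd by (simp add: pd_mat_def)
      moreover have "0 \<le> \<mu> * (v \<bullet> v)" using mu by simp
      moreover have "v \<bullet> (A0 *v v) = v \<bullet> (Km *v v) + \<mu> * (v \<bullet> v)" by (simp add: A0v inner_add_right)
      ultimately show False using h by simp
    qed
  qed
  then have "invertible A0" using matrix_left_invertible_ker invertible_left_inverse by blast
  then have AR: "A0 ** R = mat 1"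
    unfolding R_def matrix_inv_def invertible_def by (rule someI2_ex) auto
  have sol: "r - Km *v (R *v r) = \<mu> *\<^sub>R (R *v r)" for r
  proof -
    have "A0 *v (R *v r) = r" by (simp add: matrix_vector_mul_assoc AR)
    then show ?thesis by (simp add: A0v algebra_simps)
  qed
  define g where "g ov = (\<Sum>j\<in>UNIV. (R *v (y - ov))$j *\<^sub>R k (x j))" for ov
  have rob: "robust_obj k x y \<mu> lam1 f ov = lasso_obj \<mu> lam1 Km y ov +
     ((\<Sum>i\<in>UNIV. ((f - g ov) \<bullet> k (x i))\<^sup>2) + \<mu> * (norm (f - g ov))\<^sup>2)" for f ov
  proof -
    have "robust_obj k x y \<mu> lam1 f ov =
      (\<Sum>i\<in>UNIV. ((y - ov)$i - f \<bullet> k (x i))\<^sup>2) + \<mu> * (norm f)\<^sup>2 + lam1 * l1norm ov"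
      by (simp add: robust_obj_def rkhs_eval_def algebra_simps)
    also have "\<dots> = lasso_obj \<mu> lam1 Km y ov +
     ((\<Sum>i\<in>UNIV. ((f - g ov) \<bullet> k (x i))\<^sup>2) + \<mu> * (norm (f - g ov))\<^sup>2)"
      unfolding core[where k=k and xs=x and Km=Km and r="y - ov" and \<beta>="R *v (y - ov)" and \<mu>=\<mu> and f=f, OF Kdef sol] lasso_eq[OF sym psd mu] g_def
      by (simp add: A0_def R_def)
    finally show ?thesis .
  qed
  have geval: "rkhs_eval k (g ov) z = (\<Sum>i\<in>UNIV. (R *v (y - ov)) $ i * K z (x i))" for ov z
    by (simp add: g_def rkhs_eval_def inner_sum_left kk)
  show ?thesis
    unfolding Let_def Km_def[symmetric] A0_def[symmetric] R_def[symmetric]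
  proof (intro conjI allI impI)
    show "\<exists>fh. \<forall>z. rkhs_eval k fh z = (\<Sum>i\<in>UNIV. (R *v (y - o_lasso)) $ i * K z (x i))"
      using geval by blast
  next
    fix fh f ov
    assume "\<forall>z. rkhs_eval k fh z = (\<Sum>i\<in>UNIV. (R *v (y - o_lasso)) $ i * K z (x i))"
    then have "rkhs_eval k fh = rkhs_eval k (g o_lasso)" using geval by auto
    then have fh: "fh = g o_lasso" using rkhs by (simp add: is_rkhs_def inj_eq)
    have "robust_obj k x y \<mu> lam1 fh o_lasso = lasso_obj \<mu> lam1 Km y o_lasso"
      using rob[of fh o_lasso] by (simp add: fh)
    also have "\<dots> \<le> lasso_obj \<mu> lam1 Km y ov" using lasso by (simp add: Km_def)
    also have "\<dots> \<le> robust_obj k x y \<mu> lam1 f ov"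
      using rob[of f ov] mu by (simp add: sum_nonneg)
    finally show "robust_obj k x y \<mu> lam1 fh o_lasso \<le> robust_obj k x y \<mu> lam1 f ov" .
  qed
qed

end
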